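(* Let $\mu>0$ be an integer, $\beta\ge 2$ an integer base, and $f:\{0,1,\dots,\mu\}^\omega\to\mathbb{R}$ an aggregate function. If $f$ is $\omega$-regular under base $\beta$, then for every relation $R\in\{\le,<,\ge,>,=,\neq\}$ there is a B\"uchi automaton over $\{0,\dots,\mu\}\times\{0,\dots,\mu\}$ accepting exactly the pairs $(A,B)$ of sequences in $\{0,\dots,\mu\}^\omega$ (read synchronously) with $f(A)\,R\,f(B)$; i.e., the comparator of $f$ for every relation $R$ is $\omega$-regular.
   Context: Representation of reals: for an integer $\beta\ge 2$ let $\mathrm{Digit}(\beta)=\{0,\dots,\beta-1\}$. For $x\in\mathbb{R}$ there are unique words $\mathrm{Int}(x,\beta)=z_0z_1\cdots\in\mathrm{Digit}(\beta)^*0^\omega$ and $\mathrm{Frac}(x,\beta)=f_1f_2\cdots\notin \mathrm{Digit}(\beta)^*(\beta-1)^\omega$ with $|x|=\sum_{i\ge0}z_i\beta^i+\sum_{i\ge1}f_i\beta^{-i}$. The representation $\mathrm{rep}(x,\beta)$ is the $\omega$-word consisting of a sign symbol ($+$ if $x\ge0$, $-$ if $x<0$) followed by the interleaving of $\mathrm{Int}(x,\beta)$ and $\mathrm{Frac}(x,\beta)$; its alphabet is $\mathrm{AlphaRep}(\beta)=\{+,-\}\cup\mathrm{Digit}(\beta)$. A function $f:\Sigma^\omega\to\mathbb{R}$ ($\Sigma$ finite) is $\omega$-regular under base $\beta$ if there is a B\"uchi automaton over $\Sigma\times\mathrm{AlphaRep}(\beta)$ that, reading pairs of $\omega$-words synchronously,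 accepts $(A,\mathrm{rep}(x,\beta))$ iff $f(A)=x$, for all $A\in\Sigma^\omega$, $x\in\mathbb{R}$. A comparator automaton for $f$ and relation $R$ is an automaton over $\Sigma\times\Sigma$ accepting $(A,B)$ iff $f(A)\,R\,f(B)$; it is $\omega$-regular if it is a finite-state B\"uchi automaton. *)

theory Defs
  imports Complex_Main
begin

record 'a buchi =
  states :: "nat set"
  initial :: "nat set"
  trans :: "(nat \<times> 'a \<times> nat) set"
  final :: "nat set"

definition buchi_over :: "'a set \<Rightarrow> 'a buchi \<Rightarrow> bool" where
  "buchi_over S M \<longleftrightarrow> finite (states M) \<and> initial M \<subseteq> states M \<and>
     final M \<subseteq> states M \<and>
     (\<forall>(p, a, q) \<in> trans M. p \<in> states M \<and> a \<in> S \<and> q \<in> states M)"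

definition buchi_accepts :: "'a buchi \<Rightarrow> (nat \<Rightarrow> 'a) \<Rightarrow> bool" where
  "buchi_accepts M w \<longleftrightarrow> (\<exists>r :: nat \<Rightarrow> nat. r 0 \<in> initial M \<and>
     (\<forall>i. (r i, w i, r (Suc i)) \<in> trans M) \<and>
     (\<exists>\<^sub>\<infinity>i. r i \<in> final M))"

datatype repsym = Plus | Minus | Dig nat

definition Digit :: "nat \<Rightarrow> nat set" where
  "Digit \<beta> = {0..<\<beta>}"

definition AlphaRep :: "nat \<Rightarrow> repsym set" where
  "AlphaRep \<beta> = {Plus, Minus} \<union> Dig ` Digit \<beta>"

definition int_digit :: "real \<Rightarrow> nat \<Rightarrow> nat \<Rightarrow> nat" where
  "int_digit x \<beta> i = nat (\<lfloor>\<bar>x\<bar> / real \<beta> ^ i\<rfloor> mod int \<beta>)"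

text \<open>Frac(x,beta) = f_1 f_2 ...: f_i (i \<ge> 1) is the i-th fractional digit of |x|,
  the expansion not ending in (beta-1)^omega.\<close>
definition frac_digit :: "real \<Rightarrow> nat \<Rightarrow> nat \<Rightarrow> nat" where
  "frac_digit x \<beta> i = nat (\<lfloor>\<bar>x\<bar> * real \<beta> ^ i\<rfloor> mod int \<beta>)"

text \<open>rep(x,beta) = sign, z_0, f_1, z_1, f_2, z_2, f_3, ...\<close>
definition rep :: "real \<Rightarrow> nat \<Rightarrow> nat \<Rightarrow> repsym" where
  "rep x \<beta> n = (if n = 0 then (if x \<ge> 0 then Plus else Minus)
     else if odd n then Dig (int_digit x \<beta> ((n - 1) div 2))
     else Dig (frac_digit x \<beta> (n div 2)))"

definition omega_words :: "'a set \<Rightarrow> (nat \<Rightarrow> 'a) set" where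
  "omega_words S = {w. \<forall>i. w i \<in> S}"

definition omega_regular_function ::
  "'a set \<Rightarrow> ((nat \<Rightarrow> 'a) \<Rightarrow> real) \<Rightarrow> nat \<Rightarrow> bool" where
  "omega_regular_function S f \<beta> \<longleftrightarrow>
     (\<exists>M :: ('a \<times> repsym) buchi. buchi_over (S \<times> AlphaRep \<beta>) M \<and>
        (\<forall>A \<in> omega_words S. \<forall>x :: real.
           buchi_accepts M (\<lambda>i. (A i, rep x \<beta> i)) \<longleftrightarrow> f A = x))"

definition omega_regular_comparator ::
  "'a set \<Rightarrow> ((nat \<Rightarrow> 'a) \<Rightarrow> real) \<Rightarrow> (real \<Rightarrow> real \<Rightarrow> bool) \<Rightarrow> bool" where
  "omega_regular_comparator S f R \<longleftrightarrow>
     (\<exists>M :: ('a \<times> 'a) buchi. buchi_over (S \<times> S) M \<and>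
        (\<forall>A \<in> omega_words S. \<forall>B \<in> omega_words S.
           buchi_accepts M (\<lambda>i. (A i, B i)) \<longleftrightarrow> R (f A) (f B)))"

end

theory Submission
  imports Defs "HOL-Library.Infinite_Set" "HOL-Library.Countable"
begin

record ('q, 'a) nba =
  nst :: "'q set"
  nin :: "'q set"
  ntr :: "('q \<times> 'a \<times> 'q) set"
  nfin :: "'q set"

definition nacc :: "('q, 'a) nba \<Rightarrow> (nat \<Rightarrow> 'a) \<Rightarrow> bool" where
  "nacc M w \<longleftrightarrow> (\<exists>r. r 0 \<in> nin M \<and> (\<forall>i. (r i, w i, r (Suc i)) \<in> ntr M) \<and>
     (\<exists>\<^sub>\<infinity>i. r i \<in> nfin M))"

definition nwf :: "('q, 'a) nba \<Rightarrow> bool" where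
  "nwf M \<longleftrightarrow> finite (nst M) \<and> nin M \<subseteq> nst M \<and> nfin M \<subseteq> nst M \<and>
     (\<forall>(p, a, q) \<in> ntr M. p \<in> nst M \<and> q \<in> nst M)"

definition reg :: "(nat \<Rightarrow> 'a) set \<Rightarrow> bool" where
  "reg L \<longleftrightarrow> (\<exists>M :: (nat, 'a) nba. nwf M \<and> L = {w. nacc M w})"

lemma reg_rename:
  fixes M :: "('q::countable, 'a) nba"
  assumes "nwf M"
  shows "reg {w. nacc M w}"
proof -
  define M' where "M' = \<lparr>nst = to_nat ` nst M, nin = to_nat ` nin M,
     ntr = (\<lambda>(p,a,q). (to_nat p, a, to_nat q)) ` ntr M, nfin = to_nat ` nfin M\<rparr>"
  have wf: "nwf M'" using assms unfolding nwf_def M'_def by auto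
  have "nacc M w \<longleftrightarrow> nacc M' w" for w
  proof
    assume "nacc M w"
    then obtain r where r: "r 0 \<in> nin M" "\<forall>i. (r i, w i, r (Suc i)) \<in> ntr M"
      "\<exists>\<^sub>\<infinity>i. r i \<in> nfin M" unfolding nacc_def by blast
    show "nacc M' w" unfolding nacc_def
    proof (intro exI[of _ "to_nat \<circ> r"] conjI allI)
      show "(to_nat \<circ> r) 0 \<in> nin M'" using r(1) by (simp add: M'_def)
      show "((to_nat \<circ> r) i, w i, (to_nat \<circ> r) (Suc i)) \<in> ntr M'" for i
        using r(2) by (force simp: M'_def)
      show "\<exists>\<^sub>\<infinity>i. (to_nat \<circ> r) i \<in> nfin M'"
        using r(3) by (rule INFM_mono) (simp add: M'_def)
    qed
  next
    assume "nacc M' w"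
    then obtain r where r: "r 0 \<in> nin M'" "\<forall>i. (r i, w i, r (Suc i)) \<in> ntr M'"
      "\<exists>\<^sub>\<infinity>i. r i \<in> nfin M'" unfolding nacc_def by blast
    have img: "r i \<in> range (to_nat :: 'q \<Rightarrow> nat)" for i
    proof (cases i)
      case 0 then show ?thesis using r(1) by (auto simp: M'_def)
    next
      case (Suc j) then show ?thesis using r(2)[rule_format, of j] by (auto simp: M'_def)
    qed
    have rr: "to_nat (from_nat (r i) :: 'q) = r i" for i
      using img[of i] by auto
    show "nacc M w" unfolding nacc_def
    proof (intro exI[of _ "\<lambda>i. from_nat (r i) :: 'q"] conjI allI)
      show "from_nat (r 0) \<in> nin M" using r(1) by (auto simp: M'_def)
      show "(from_nat (r i), w i, from_nat (r (Suc i))) \<in> ntr M" for i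
        using r(2)[rule_format, of i] by (auto simp: M'_def)
      show "\<exists>\<^sub>\<infinity>i. from_nat (r i) \<in> nfin M"
        using r(3) by (rule INFM_mono) (auto simp: M'_def)
    qed
  qed
  then show ?thesis using wf unfolding reg_def by (intro exI[of _ M']) auto
qed

lemma run_in_nst:
  assumes "nwf M" "r 0 \<in> nin M" "\<forall>i. (r i, w i, r (Suc i)) \<in> ntr M"
  shows "r i \<in> nst M"
proof (cases i)
  case 0 then show ?thesis using assms unfolding nwf_def by auto
next
  case (Suc j) then show ?thesis using assms(1) assms(3)[rule_format, of j] unfolding nwf_def by auto
qed

lemma reg_preimage:
  fixes L :: "(nat \<Rightarrow> 'b) set" and h :: "'a \<Rightarrow> 'b"
  assumes "reg L"
  shows "reg {w. h \<circ> w \<in> L}"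
proof -
  obtain M :: "(nat,'b) nba" where M: "nwf M" "L = {w. nacc M w}" using assms unfolding reg_def by blast
  define M' where "M' = \<lparr>nst = nst M, nin = nin M, ntr = {(p,a,q). (p, h a, q) \<in> ntr M}, nfin = nfin M\<rparr>"
  have "nwf M'" using M(1) unfolding nwf_def M'_def by auto
  moreover have "nacc M' w \<longleftrightarrow> nacc M (h \<circ> w)" for w
    unfolding nacc_def M'_def by simp
  ultimately show ?thesis using M(2) unfolding reg_def by (intro exI[of _ M']) auto
qed

lemma reg_image:
  fixes L :: "(nat \<Rightarrow> 'b) set" and h :: "'b \<Rightarrow> 'a"
  assumes "reg L"
  shows "reg {w. \<exists>v\<in>L. w = h \<circ> v}"
proof -
  obtain M :: "(nat,'b) nba" where M: "nwf M" "L = {w. nacc M w}" using assms unfolding reg_def by blast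
  define M' where "M' = \<lparr>nst = nst M, nin = nin M, ntr = (\<lambda>(p,a,q). (p, h a, q)) ` ntr M, nfin = nfin M\<rparr>"
  have "nwf M'" using M(1) unfolding nwf_def M'_def by auto
  moreover have "nacc M' w \<longleftrightarrow> (\<exists>v. nacc M v \<and> w = h \<circ> v)" for w
  proof
    assume "nacc M' w"
    then obtain r where r: "r 0 \<in> nin M" "\<forall>i. (r i, w i, r (Suc i)) \<in> ntr M'"
      "\<exists>\<^sub>\<infinity>i. r i \<in> nfin M" unfolding nacc_def M'_def by auto
    have "\<forall>i. \<exists>a. (r i, a, r (Suc i)) \<in> ntr M \<and> w i = h a"
      using r(2) unfolding M'_def by force
    then obtain v where v: "\<forall>i. (r i, v i, r (Suc i)) \<in> ntr M \<and> w i = h (v i)" by metis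
    have "nacc M v" unfolding nacc_def using r v by blast
    moreover have "w = h \<circ> v" using v by auto
    ultimately show "\<exists>v. nacc M v \<and> w = h \<circ> v" by blast
  next
    assume "\<exists>v. nacc M v \<and> w = h \<circ> v"
    then obtain v r where r: "r 0 \<in> nin M" "\<forall>i. (r i, v i, r (Suc i)) \<in> ntr M"
      "\<exists>\<^sub>\<infinity>i. r i \<in> nfin M" and w: "w = h \<circ> v" unfolding nacc_def by blast
    show "nacc M' w" unfolding nacc_def M'_def using r w by (auto intro!: exI[of _ r] image_eqI)
  qed
  ultimately show ?thesis using M(2) unfolding reg_def by (intro exI[of _ M']) auto
qed


lemma reg_Int:
  fixes L1 L2 :: "(nat \<Rightarrow> 'a) set"
  assumes "reg L1" "reg L2"
  shows "reg (L1 \<inter> L2)"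
proof -
  obtain M1 :: "(nat,'a) nba" where M1: "nwf M1" "L1 = {w. nacc M1 w}" using assms(1) unfolding reg_def by blast
  obtain M2 :: "(nat,'a) nba" where M2: "nwf M2" "L2 = {w. nacc M2 w}" using assms(2) unfolding reg_def by blast
  define M where "M = \<lparr>nst = nst M1 \<times> nst M2 \<times> (UNIV :: bool set),
     nin = nin M1 \<times> nin M2 \<times> {False},
     ntr = {((p1,p2,b),a,(q1,q2,b')). (p1,a,q1) \<in> ntr M1 \<and> (p2,a,q2) \<in> ntr M2 \<and>
              b' = (if b then p2 \<notin> nfin M2 else p1 \<in> nfin M1)},
     nfin = nst M1 \<times> nfin M2 \<times> {True}\<rparr>"
  have wf: "nwf M" using M1(1) M2(1) unfolding nwf_def M_def by auto
  have "nacc M w \<longleftrightarrow> nacc M1 w \<and> nacc M2 w" for w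
  proof
    assume "nacc M w"
    then obtain r where r: "r 0 \<in> nin M" "\<forall>i. (r i, w i, r (Suc i)) \<in> ntr M"
      "\<exists>\<^sub>\<infinity>i. r i \<in> nfin M" unfolding nacc_def by blast
    define r1 where "r1 = (\<lambda>i. fst (r i))"
    define r2 where "r2 = (\<lambda>i. fst (snd (r i)))"
    define b where "b = (\<lambda>i. snd (snd (r i)))"
    have t1: "(r1 i, w i, r1 (Suc i)) \<in> ntr M1" and t2: "(r2 i, w i, r2 (Suc i)) \<in> ntr M2"
      and tb: "b (Suc i) = (if b i then r2 i \<notin> nfin M2 else r1 i \<in> nfin M1)" for i
      using r(2)[rule_format, of i] unfolding r1_def r2_def b_def M_def
      by (auto split: prod.splits)
    have fin: "\<exists>\<^sub>\<infinity>i. r2 i \<in> nfin M2 \<and> b i"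
      using r(3) by (rule INFM_mono) (auto simp: M_def r2_def b_def)
    have i1: "\<exists>\<^sub>\<infinity>i. r1 i \<in> nfin M1"
    proof (rule ccontr)
      assume "\<not> ?thesis"
      then obtain m where m: "\<forall>i>m. r1 i \<notin> nfin M1"
        unfolding INFM_nat by auto
      obtain i0 where i0: "i0 > m" "r2 i0 \<in> nfin M2" "b i0" using fin unfolding INFM_nat by blast
      have "\<not> b (Suc i0 + k)" for k
      proof (induction k)
        case 0 then show ?case using tb[of i0] i0 by simp
      next
        case (Suc k) then show ?case using tb[of "Suc i0 + k"] m i0(1) by simp
      qed
      moreover obtain j where "j > Suc i0" "b j" using fin unfolding INFM_nat by blast
      ultimately show False by (metis less_imp_add_positive less_or_eq_imp_le le_add_diff_inverse)
    qed
    have i2: "\<exists>\<^sub>\<infinity>i. r2 i \<in> nfin M2" using fin by (rule INFM_mono) simp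
    have "r1 0 \<in> nin M1" "r2 0 \<in> nin M2" using r(1) unfolding M_def r1_def r2_def by auto
    then show "nacc M1 w \<and> nacc M2 w" unfolding nacc_def using t1 t2 i1 i2 by blast
  next
    assume "nacc M1 w \<and> nacc M2 w"
    then obtain r1 r2 where r1: "r1 0 \<in> nin M1" "\<forall>i. (r1 i, w i, r1 (Suc i)) \<in> ntr M1"
      "\<exists>\<^sub>\<infinity>i. r1 i \<in> nfin M1" and r2: "r2 0 \<in> nin M2" "\<forall>i. (r2 i, w i, r2 (Suc i)) \<in> ntr M2"
      "\<exists>\<^sub>\<infinity>i. r2 i \<in> nfin M2" unfolding nacc_def by blast
    define b where "b = rec_nat False (\<lambda>i bi. if bi then r2 i \<notin> nfin M2 else r1 i \<in> nfin M1)"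
    have b0: "b 0 = False" and bS: "b (Suc i) = (if b i then r2 i \<notin> nfin M2 else r1 i \<in> nfin M1)" for i
      unfolding b_def by simp_all
    have inst1: "r1 i \<in> nst M1" for i using run_in_nst[OF M1(1) r1(1) r1(2)] .
    have main: "\<exists>k>m. r2 k \<in> nfin M2 \<and> b k" for m
    proof -
      obtain j1 where j1: "j1 > m" "r1 j1 \<in> nfin M1" using r1(3) unfolding INFM_nat by blast
      have "\<exists>j>m. b j"
      proof (cases "b j1")
        case True then show ?thesis using j1 by blast
      next
        case False then show ?thesis using j1 bS[of j1] by (intro exI[of _ "Suc j1"]) auto
      qed
      then obtain j where j: "j > m" "b j" by blast
      have ex: "\<exists>k\<ge>j. r2 k \<in> nfin M2" using r2(3) unfolding INFM_nat_le by blast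
      define k where "k = (LEAST k. k \<ge> j \<and> r2 k \<in> nfin M2)"
      have k: "k \<ge> j" "r2 k \<in> nfin M2" using LeastI_ex[OF ex] unfolding k_def by auto
      have kmin: "\<And>l. j \<le> l \<Longrightarrow> l < k \<Longrightarrow> r2 l \<notin> nfin M2"
        unfolding k_def using not_less_Least by blast
      have "\<forall>d. j + d \<le> k \<longrightarrow> b (j + d)"
      proof
        fix d show "j + d \<le> k \<longrightarrow> b (j + d)"
        proof (induction d)
          case 0 then show ?case using j by simp
        next
          case (Suc d) then show ?case using kmin[of "j+d"] bS[of "j+d"] by auto
        qed
      qed
      then have "b k" using k(1) by (metis le_add_diff_inverse order_refl)
      then show ?thesis using k j by (intro exI[of _ k]) auto
    qed
    show "nacc M w" unfolding nacc_def
    proof (intro exI[of _ "\<lambda>i. (r1 i, r2 i, b i)"] conjI allI)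
      show "(r1 0, r2 0, b 0) \<in> nin M" using r1 r2 b0 by (simp add: M_def)
      show "((r1 i, r2 i, b i), w i, r1 (Suc i), r2 (Suc i), b (Suc i)) \<in> ntr M" for i
        using r1(2) r2(2) bS[of i] by (simp add: M_def)
      show "\<exists>\<^sub>\<infinity>i. (r1 i, r2 i, b i) \<in> nfin M"
        unfolding INFM_nat using main inst1 by (auto simp: M_def)
    qed
  qed
  then have "L1 \<inter> L2 = {w. nacc M w}" using M1 M2 by auto
  then show ?thesis using reg_rename[OF wf] by simp
qed

definition drun :: "'q \<Rightarrow> ('q \<Rightarrow> 'a \<Rightarrow> 'q) \<Rightarrow> (nat \<Rightarrow> 'a) \<Rightarrow> nat \<Rightarrow> 'q" where
  "drun q0 \<delta> w = rec_nat q0 (\<lambda>i q. \<delta> q (w i))"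

lemma drun_simps[simp]: "drun q0 \<delta> w 0 = q0" "drun q0 \<delta> w (Suc i) = \<delta> (drun q0 \<delta> w i) (w i)"
  unfolding drun_def by simp_all

lemma reg_det:
  fixes q0 :: "'q::finite" and \<delta> :: "'q \<Rightarrow> 'a \<Rightarrow> 'q"
  shows "reg {w. \<exists>\<^sub>\<infinity>i. drun q0 \<delta> w i \<in> F}"
proof -
  define M where "M = \<lparr>nst = (UNIV :: 'q set), nin = {q0}, ntr = {(p,a,q). q = \<delta> p a}, nfin = F\<rparr>"
  have wf: "nwf M" unfolding nwf_def M_def by auto
  have "nacc M w \<longleftrightarrow> (\<exists>\<^sub>\<infinity>i. drun q0 \<delta> w i \<in> F)" for w
  proof
    assume "nacc M w"
    then obtain r where r: "r 0 = q0" "\<forall>i. r (Suc i) = \<delta> (r i) (w i)" "\<exists>\<^sub>\<infinity>i. r i \<in> F"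
      unfolding nacc_def M_def by auto
    have "r i = drun q0 \<delta> w i" for i by (induction i) (use r in auto)
    then show "\<exists>\<^sub>\<infinity>i. drun q0 \<delta> w i \<in> F" using r(3) by simp
  next
    assume "\<exists>\<^sub>\<infinity>i. drun q0 \<delta> w i \<in> F"
    then show "nacc M w" unfolding nacc_def M_def by (intro exI[of _ "drun q0 \<delta> w"]) auto
  qed
  then show ?thesis using reg_rename[OF wf] by simp
qed

lemma reg_to_buchi:
  assumes "reg L"
  shows "\<exists>M :: 'a buchi. buchi_over S M \<and> (\<forall>w. (\<forall>i. w i \<in> S) \<longrightarrow> (buchi_accepts M w \<longleftrightarrow> w \<in> L))"
proof -
  obtain N :: "(nat,'a) nba" where N: "nwf N" "L = {w. nacc N w}" using assms unfolding reg_def by blast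
  define M where "M = \<lparr>states = nst N, initial = nin N, trans = {(p,a,q) \<in> ntr N. a \<in> S}, final = nfin N\<rparr>"
  have "buchi_over S M" using N(1) unfolding buchi_over_def nwf_def M_def by auto
  moreover have "buchi_accepts M w \<longleftrightarrow> w \<in> L" if "\<forall>i. w i \<in> S" for w
    using that unfolding N(2) buchi_accepts_def nacc_def M_def by auto
  ultimately show ?thesis by blast
qed

lemma buchi_to_reg:
  assumes "buchi_over S M"
  shows "reg {w. buchi_accepts M w}"
proof -
  define N where "N = \<lparr>nst = states M, nin = initial M, ntr = trans M, nfin = final M\<rparr>"
  have "nwf N" using assms unfolding buchi_over_def nwf_def N_def by auto
  moreover have "buchi_accepts M w \<longleftrightarrow> nacc N w" for w unfolding buchi_accepts_def nacc_def N_def by simp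
  ultimately show ?thesis unfolding reg_def by (intro exI[of _ N]) auto
qed


definition IP :: "real \<Rightarrow> nat" where "IP x = nat \<lfloor>\<bar>x\<bar>\<rfloor>"
definition AP :: "nat \<Rightarrow> real \<Rightarrow> nat \<Rightarrow> nat" where "AP \<beta> x k = nat \<lfloor>\<bar>x\<bar> * real \<beta> ^ k\<rfloor>"

lemma AP_le: "real (AP \<beta> x k) \<le> \<bar>x\<bar> * real \<beta> ^ k"
  unfolding AP_def by (simp add: of_nat_nat)
lemma AP_gt: "\<bar>x\<bar> * real \<beta> ^ k < real (AP \<beta> x k) + 1"
  unfolding AP_def by (simp add: of_nat_nat)
lemma AP_0: "AP \<beta> x 0 = IP x" unfolding AP_def IP_def by simp

lemma floor_div_pow:
  assumes "t \<ge> 0"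
  shows "nat \<lfloor>t\<rfloor> div n = nat \<lfloor>t / real n\<rfloor>"
proof -
  have "\<lfloor>t / real_of_int (int n)\<rfloor> = \<lfloor>t\<rfloor> div int n"
    by (rule floor_divide_real_eq_div) simp
  then show ?thesis using assms by (simp add: nat_div_distrib)
qed

lemma int_digit_eq:
  shows "int_digit x \<beta> i = IP x div \<beta> ^ i mod \<beta>"
proof -
  have "IP x div \<beta> ^ i = nat \<lfloor>\<bar>x\<bar> / real (\<beta> ^ i)\<rfloor>"
    unfolding IP_def by (rule floor_div_pow) simp
  moreover have "\<lfloor>\<bar>x\<bar> / real \<beta> ^ i\<rfloor> \<ge> 0" by simp
  ultimately show ?thesis unfolding int_digit_def
    by (simp add: nat_mod_distrib)
qed

lemma frac_digit_eq: "frac_digit x \<beta> k = AP \<beta> x k mod \<beta>"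
  unfolding frac_digit_def AP_def by (simp add: nat_mod_distrib)

lemma AP_div_pow:
  assumes "\<beta> > 0"
  shows "AP \<beta> x (m + k) div \<beta> ^ k = AP \<beta> x m"
proof -
  have False: "\<beta> \<noteq> 0" using assms by simp
  have "AP \<beta> x (m + k) div \<beta> ^ k = nat \<lfloor>\<bar>x\<bar> * real \<beta> ^ (m + k) / real (\<beta> ^ k)\<rfloor>"
    unfolding AP_def by (rule floor_div_pow) simp
  also have "\<bar>x\<bar> * real \<beta> ^ (m + k) / real (\<beta> ^ k) = \<bar>x\<bar> * real \<beta> ^ m"
    using False by (simp add: power_add)
  finally show ?thesis unfolding AP_def .
qed

lemma AP_Suc_div: assumes b0: "\<beta> > 0" shows "AP \<beta> x (Suc k) div \<beta> = AP \<beta> x k"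
  using AP_div_pow[OF b0, of x k 1] by simp

lemma AP_Suc: assumes b0: "\<beta> > 0" shows "AP \<beta> x (Suc k) = \<beta> * AP \<beta> x k + AP \<beta> x (Suc k) mod \<beta>"
proof -
  have e: "AP \<beta> x (Suc k) = \<beta> * (AP \<beta> x (Suc k) div \<beta>) + AP \<beta> x (Suc k) mod \<beta>" by simp
  then show ?thesis unfolding AP_Suc_div[OF b0] .
qed

lemma AP_mod_Suc: assumes b0: "\<beta> > 0" shows
  "AP \<beta> x (Suc k) mod \<beta> ^ Suc k = \<beta> * (AP \<beta> x k mod \<beta> ^ k) + AP \<beta> x (Suc k) mod \<beta>"
  using mod_mult2_eq[of "AP \<beta> x (Suc k)" \<beta> "\<beta> ^ k"] AP_Suc_div[OF b0, of x k]
  by (simp add: mult.commute)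

lemma AP_split: assumes b0: "\<beta> > 0" shows "AP \<beta> x k = \<beta> ^ k * IP x + AP \<beta> x k mod \<beta> ^ k"
proof -
  have d: "AP \<beta> x k div \<beta> ^ k = IP x" using AP_div_pow[OF b0, of x 0 k] AP_0[of \<beta> x] by simp
  have e: "AP \<beta> x k = \<beta> ^ k * (AP \<beta> x k div \<beta> ^ k) + AP \<beta> x k mod \<beta> ^ k" by simp
  then show ?thesis unfolding d .
qed

lemma digits_zero_nat:
  fixes n :: nat
  assumes "\<beta> \<ge> 2" "\<forall>k. n div \<beta> ^ k mod \<beta> = 0"
  shows "n = 0"
  using assms(2)
proof (induction n rule: less_induct)
  case (less n)
  show ?case
  proof (rule ccontr)
    assume n: "n \<noteq> 0"
    have "\<forall>k. (n div \<beta>) div \<beta> ^ k mod \<beta> = 0"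
    proof
      fix k show "(n div \<beta>) div \<beta> ^ k mod \<beta> = 0"
        using less.prems[rule_format, of "Suc k"] by (simp add: div_mult2_eq)
    qed
    moreover have "n div \<beta> < n" using n assms(1) by simp
    ultimately have "n div \<beta> = 0" using less.IH by blast
    moreover have "n mod \<beta> = 0" using less.prems[rule_format, of 0] by simp
    moreover have "n = \<beta> * (n div \<beta>) + n mod \<beta>" by simp
    ultimately show False using n by simp
  qed
qed

lemma pow_unbounded:
  assumes "\<beta> \<ge> 2"
  shows "\<exists>k. y < real \<beta> ^ k"
  using real_arch_pow[of "real \<beta>" y] assms by simp


definition valid_form :: "nat \<Rightarrow> (nat \<Rightarrow> repsym) \<Rightarrow> bool" where
  "valid_form \<beta> w \<longleftrightarrow> w 0 \<in> {Plus, Minus} \<and> (\<forall>n>0. \<exists>d<\<beta>. w n = Dig d) \<and>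
     (\<exists>N. \<forall>i\<ge>N. odd i \<longrightarrow> w i = Dig 0) \<and> (\<forall>M. \<exists>k>M. even k \<and> w k \<noteq> Dig (\<beta> - 1)) \<and>
     (w 0 = Minus \<longrightarrow> (\<exists>n>0. w n \<noteq> Dig 0))"

lemma rep_odd: "rep x \<beta> (2 * i + 1) = Dig (int_digit x \<beta> i)"
  unfolding rep_def by simp
lemma rep_even: "k > 0 \<Longrightarrow> rep x \<beta> (2 * k) = Dig (frac_digit x \<beta> k)"
  unfolding rep_def by simp
lemma rep_0: "rep x \<beta> 0 = (if x \<ge> 0 then Plus else Minus)"
  unfolding rep_def by simp

lemma frac_inf:
  assumes b: "\<beta> \<ge> 2"
  shows "\<exists>k>N. AP \<beta> x k mod \<beta> \<noteq> \<beta> - 1"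
proof (rule ccontr)
  assume "\<not> ?thesis"
  then have h: "\<And>k. k > N \<Longrightarrow> AP \<beta> x k mod \<beta> = \<beta> - 1" by blast
  have c: "AP \<beta> x (N + j) + 1 = \<beta> ^ j * (AP \<beta> x N + 1)" for j
  proof (induction j)
    case 0 then show ?case by simp
  next
    case (Suc j)
    have "AP \<beta> x (N + Suc j) = \<beta> * AP \<beta> x (N + j) + (\<beta> - 1)"
      using AP_Suc[of \<beta> x "N + j"] h[of "N + Suc j"] b by simp
    then have "AP \<beta> x (N + Suc j) + 1 = \<beta> * (AP \<beta> x (N + j) + 1)"
      using b by (simp add: algebra_simps)
    also have "\<dots> = \<beta> * (\<beta> ^ j * (AP \<beta> x N + 1))" by (simp only: Suc.IH)
    also have "\<dots> = \<beta> ^ Suc j * (AP \<beta> x N + 1)" by (simp only: power_Suc mult.assoc)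
    finally show ?case .
  qed
  define e where "e = real (AP \<beta> x N) + 1 - \<bar>x\<bar> * real \<beta> ^ N"
  have e0: "e > 0" using AP_gt[of x \<beta> N] unfolding e_def by simp
  obtain j where j: "1 / e < real \<beta> ^ j" using pow_unbounded[OF b] by blast
  have j': "1 < real \<beta> ^ j * e" using j e0 by (simp add: field_simps)
  have "real (AP \<beta> x (N + j)) \<le> \<bar>x\<bar> * real \<beta> ^ (N + j)" by (rule AP_le)
  also have "\<bar>x\<bar> * real \<beta> ^ (N + j) = real \<beta> ^ j * (real (AP \<beta> x N) + 1) - real \<beta> ^ j * e"
    unfolding e_def by (simp add: power_add algebra_simps)
  also have "real \<beta> ^ j * (real (AP \<beta> x N) + 1) = real (AP \<beta> x (N + j)) + 1"
    using arg_cong[OF c[of j], of real] by (simp add: algebra_simps)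
  finally show False using j' by simp
qed

lemma rep_valid:
  assumes b: "\<beta> \<ge> 2"
  shows "valid_form \<beta> (\<lambda>n. rep x \<beta> n)"
proof -
  have b0: "\<beta> > 0" using b by simp
  have shape: "\<exists>d<\<beta>. rep x \<beta> n = Dig d" if "n > 0" for n
    using that b0 unfolding rep_def by (auto simp: int_digit_eq frac_digit_eq)
  have evz: "\<forall>i\<ge>2 * IP x + 1. odd i \<longrightarrow> rep x \<beta> i = Dig 0"
  proof (intro allI impI)
    fix i assume i: "i \<ge> 2 * IP x + 1" "odd i"
    then obtain j where j: "i = 2 * j + 1" by (metis oddE)
    have "IP x \<le> j" using i j by simp
    also have "j < 2 ^ j" by simp
    also have "(2::nat) ^ j \<le> \<beta> ^ j" using b by (simp add: power_mono)
    finally have "IP x div \<beta> ^ j = 0" by simp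
    then show "rep x \<beta> i = Dig 0" unfolding j rep_odd int_digit_eq by simp
  qed
  have inf: "\<exists>k>M. even k \<and> rep x \<beta> k \<noteq> Dig (\<beta> - 1)" for M
  proof -
    obtain k where k: "k > M" "AP \<beta> x k mod \<beta> \<noteq> \<beta> - 1" using frac_inf[OF b] by blast
    have "k > 0" using k by simp
    then show ?thesis using k by (intro exI[of _ "2 * k"]) (simp add: rep_even frac_digit_eq)
  qed
  have minus: "\<exists>n>0. rep x \<beta> n \<noteq> Dig 0" if "rep x \<beta> 0 = Minus"
  proof (rule ccontr)
    assume "\<not> ?thesis"
    then have z: "\<And>n. n > 0 \<Longrightarrow> rep x \<beta> n = Dig 0" by blast
    have x: "x < 0" using that unfolding rep_def by (auto split: if_splits)
    have "\<forall>k. IP x div \<beta> ^ k mod \<beta> = 0"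
    proof
      fix k show "IP x div \<beta> ^ k mod \<beta> = 0"
        using z[of "2 * k + 1"] unfolding rep_odd int_digit_eq by simp
    qed
    then have ip: "IP x = 0" by (rule digits_zero_nat[OF b])
    have ap: "AP \<beta> x k = 0" for k
    proof (induction k)
      case 0 then show ?case using ip by (simp add: AP_0)
    next
      case (Suc k)
      have "AP \<beta> x (Suc k) mod \<beta> = 0" using z[of "2 * Suc k"] unfolding rep_even[of "Suc k", OF zero_less_Suc] frac_digit_eq by simp
      then show ?case using AP_Suc[OF b0, of x k] Suc.IH by simp
    qed
    obtain k where k: "1 / \<bar>x\<bar> < real \<beta> ^ k" using pow_unbounded[OF b] by blast
    have "1 < \<bar>x\<bar> * real \<beta> ^ k" using k x by (simp add: field_simps)
    moreover have "\<bar>x\<bar> * real \<beta> ^ k < 1" using AP_gt[of x \<beta> k] ap[of k] by simp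
    ultimately show False by simp
  qed
  show ?thesis unfolding valid_form_def
    using shape evz inf minus by (auto simp: rep_0)
qed


definition dv :: "repsym \<Rightarrow> nat" where "dv r = (case r of Dig d \<Rightarrow> d | _ \<Rightarrow> 0)"
lemma dv_Dig[simp]: "dv (Dig d) = d" unfolding dv_def by simp

lemma digit_sum:
  fixes z :: "nat \<Rightarrow> nat"
  assumes "\<forall>i. z i < \<beta>"
  shows "(\<Sum>i<N. z i * \<beta> ^ i) div \<beta> ^ k mod \<beta> = (if k < N then z k else 0)"
  using assms
proof (induction k arbitrary: z N)
  case 0
  show ?case
  proof (cases N)
    case 0 then show ?thesis by simp
  next
    case (Suc M)
    have "(\<Sum>i<N. z i * \<beta> ^ i) = z 0 + \<beta> * (\<Sum>i<M. z (Suc i) * \<beta> ^ i)"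
      unfolding Suc sum.lessThan_Suc_shift by (simp add: sum_distrib_left algebra_simps)
    then show ?thesis using 0 Suc by simp
  qed
next
  case (Suc k)
  show ?case
  proof (cases "N = 0")
    case True then show ?thesis by simp
  next
    case False
    then obtain M where SucM: "N = Suc M" by (cases N) auto
    have b0: "\<beta> > 0" using Suc.prems by (metis gr_zeroI less_nat_zero_code)
    have e: "(\<Sum>i<N. z i * \<beta> ^ i) = z 0 + \<beta> * (\<Sum>i<M. z (Suc i) * \<beta> ^ i)"
      unfolding SucM sum.lessThan_Suc_shift by (simp add: sum_distrib_left algebra_simps)
    have "(\<Sum>i<N. z i * \<beta> ^ i) div \<beta> = (\<Sum>i<M. z (Suc i) * \<beta> ^ i)"
      unfolding e using Suc.prems b0 by simp
    then have "(\<Sum>i<N. z i * \<beta> ^ i) div \<beta> ^ Suc k = (\<Sum>i<M. z (Suc i) * \<beta> ^ i) div \<beta> ^ k"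
      by (simp add: div_mult2_eq)
    then show ?thesis using Suc.IH[of "\<lambda>i. z (Suc i)" M] Suc.prems SucM by simp
  qed
qed

lemma valid_rep:
  assumes b: "\<beta> \<ge> 2" and v: "valid_form \<beta> w"
  shows "\<exists>x. w = (\<lambda>n. rep x \<beta> n)"
proof -
  have b0: "\<beta> > 0" using b by simp
  define bb where "bb = real \<beta>"
  have bb: "bb \<ge> 2" using b unfolding bb_def by simp
  from v have w0: "w 0 \<in> {Plus, Minus}" and sh: "\<And>n. n > 0 \<Longrightarrow> \<exists>d<\<beta>. w n = Dig d"
    and infr: "\<And>M. \<exists>k>M. even k \<and> w k \<noteq> Dig (\<beta> - 1)"
    and mn: "w 0 = Minus \<Longrightarrow> \<exists>n>0. w n \<noteq> Dig 0"
    unfolding valid_form_def by blast+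
  from v obtain N where N: "\<And>i. i \<ge> N \<Longrightarrow> odd i \<Longrightarrow> w i = Dig 0"
    unfolding valid_form_def by blast
  have wD: "w n = Dig (dv (w n))" and wlt: "dv (w n) < \<beta>" if "n > 0" for n
    using sh[OF that] by auto
  define z where "z i = dv (w (2 * i + 1))" for i
  define f where "f k = dv (w (2 * k))" for k
  have zlt: "z i < \<beta>" for i unfolding z_def using wlt by simp
  have flt: "f k < \<beta>" if "k > 0" for k unfolding f_def using wlt that by simp
  have fle: "real (f k) \<le> bb - 1" if "k > 0" for k using flt[OF that] unfolding bb_def by linarith
  have z0: "z i = 0" if "i \<ge> N" for i unfolding z_def using N[of "2 * i + 1"] that by simp
  have finf: "\<exists>k>M. real (f k) \<le> bb - 2" for M
  proof -
    obtain p where p: "p > 2 * M" "even p" "w p \<noteq> Dig (\<beta> - 1)" using infr by blast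
    then obtain k where k: "p = 2 * k" by blast
    have "k > M" using p k by simp
    moreover have "f k \<noteq> \<beta> - 1"
    proof -
      obtain d where d: "w p = Dig d" using sh[of p] p by auto
      then show ?thesis using p k unfolding f_def by auto
    qed
    moreover have "f k < \<beta>" using flt[of k] \<open>k > M\<close> by simp
    ultimately show ?thesis unfolding bb_def using b by (intro exI[of _ k]) auto
  qed
  define T where "T = (\<Sum>i<N. z i * \<beta> ^ i)"
  define g where "g k j = real (f (k + j + 1)) / bb ^ (j + 1)" for k j
  define \<phi> where "\<phi> k = suminf (g k)" for k
  have gnn: "0 \<le> g k j" for k j unfolding g_def using bb by simp
  have gle: "g k j \<le> ((bb - 1) / bb) * (1 / bb) ^ j" for k j
  proof -
    have "real (f (k + j + 1)) \<le> bb - 1" using fle by simp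
    then have "g k j \<le> (bb - 1) / bb ^ (j + 1)" unfolding g_def using bb
      by (simp add: divide_right_mono)
    also have "\<dots> = ((bb - 1) / bb) * (1 / bb) ^ j" by (simp add: power_divide field_simps)
    finally show ?thesis .
  qed
  have geo: "summable (\<lambda>j. (1 / bb) ^ j)" using bb by (intro summable_geometric) simp
  have geo2: "summable (\<lambda>j. ((bb - 1) / bb) * (1 / bb) ^ j)" by (rule summable_mult[OF geo])
  have sg: "summable (g k)" for k
    by (rule summable_comparison_test'[OF geo2, of 0]) (use gnn gle in simp)
  have phi0: "0 \<le> \<phi> k" for k unfolding \<phi>_def by (rule suminf_nonneg[OF sg gnn])
  have phi1: "\<phi> k \<le> 1" for k
  proof -
    have "\<phi> k \<le> suminf (\<lambda>j. ((bb - 1) / bb) * (1 / bb) ^ j)"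
      unfolding \<phi>_def by (rule suminf_le[OF gle sg geo2])
    also have "\<dots> = ((bb - 1) / bb) * suminf (\<lambda>j. (1 / bb) ^ j)" by (rule suminf_mult[OF geo])
    also have "suminf (\<lambda>j. (1 / bb) ^ j) = 1 / (1 - 1 / bb)"
      by (rule suminf_geometric) (use bb in simp)
    finally have "\<phi> k \<le> ((bb - 1) / bb) * (1 / (1 - 1 / bb))" .
    also have "\<dots> = 1" using bb by (simp add: field_simps)
    finally show ?thesis .
  qed
  have phirec: "\<phi> k = (real (f (Suc k)) + \<phi> (Suc k)) / bb" for k
  proof -
    have "(\<lambda>j. g k (Suc j)) = (\<lambda>j. g (Suc k) j / bb)"
      unfolding g_def by (rule ext) (simp add: field_simps)
    then have "(\<Sum>j. g k (Suc j)) = \<phi> (Suc k) / bb"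
      unfolding \<phi>_def using suminf_divide[OF sg[of "Suc k"]] by simp
    moreover have "(\<Sum>j. g k (Suc j)) = \<phi> k - g k 0" unfolding \<phi>_def by (rule suminf_split_head[OF sg])
    moreover have "g k 0 = real (f (Suc k)) / bb" unfolding g_def by simp
    ultimately show ?thesis by (simp add: add_divide_distrib)
  qed
  have philt: "\<phi> k < 1" for k
  proof -
    obtain m where m: "m > k" "real (f m) \<le> bb - 2" using finf by blast
    have base: "\<phi> (m - 1) < 1"
    proof -
      have "\<phi> (m - 1) = (real (f m) + \<phi> m) / bb" using phirec[of "m - 1"] m(1) by simp
      also have "\<dots> \<le> (bb - 1) / bb" using m(2) phi1[of m] bb by (simp add: divide_right_mono)
      also have "\<dots> < 1" using bb by simp
      finally show ?thesis .
    qed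
    have step: "\<phi> (m - 1 - d) < 1" if "d \<le> m - 1" for d
      using that
    proof (induction d)
      case 0 then show ?case using base by simp
    next
      case (Suc d)
      have idx: "Suc (m - 1 - Suc d) = m - 1 - d" using Suc.prems by simp
      have pos: "m - 1 - d > 0" using Suc.prems by simp
      have "\<phi> (m - 1 - Suc d) = (real (f (m - 1 - d)) + \<phi> (m - 1 - d)) / bb"
        using phirec[of "m - 1 - Suc d"] idx by simp
      also have "\<dots> < (bb - 1 + 1) / bb"
        using fle[OF pos] Suc.IH Suc.prems bb by (intro divide_strict_right_mono) simp_all
      also have "\<dots> = 1" using bb by simp
      finally show ?case .
    qed
    show ?thesis using step[of "m - 1 - k"] m(1) by simp
  qed
  define Q where "Q = rec_nat T (\<lambda>k q. \<beta> * q + f (Suc k))"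
  have Q0: "Q 0 = T" and QS: "Q (Suc k) = \<beta> * Q k + f (Suc k)" for k unfolding Q_def by simp_all
  define ax where "ax = real T + \<phi> 0"
  define x where "x = (if w 0 = Minus then - ax else ax)"
  have ax0: "ax \<ge> 0" unfolding ax_def using phi0 by simp
  have absx: "\<bar>x\<bar> = ax" unfolding x_def using ax0 by simp
  have xk: "\<bar>x\<bar> * bb ^ k = real (Q k) + \<phi> k" for k
  proof (induction k)
    case 0 then show ?case using absx by (simp add: Q0 ax_def)
  next
    case (Suc k)
    have "\<bar>x\<bar> * bb ^ Suc k = (real (Q k) + \<phi> k) * bb" using Suc.IH by (simp add: algebra_simps)
    also have "\<dots> = bb * real (Q k) + real (f (Suc k)) + \<phi> (Suc k)"
      using phirec[of k] bb by (simp add: field_simps)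
    finally show ?case unfolding QS bb_def by simp
  qed
  have APQ: "AP \<beta> x k = Q k" for k
  proof -
    have e: "\<bar>x\<bar> * real \<beta> ^ k = real (Q k) + \<phi> k" using xk[of k] unfolding bb_def .
    have "\<lfloor>\<bar>x\<bar> * real \<beta> ^ k\<rfloor> = int (Q k)"
    proof (rule floor_unique)
      show "real_of_int (int (Q k)) \<le> \<bar>x\<bar> * real \<beta> ^ k" unfolding e using phi0[of k] by simp
      show "\<bar>x\<bar> * real \<beta> ^ k < real_of_int (int (Q k)) + 1" unfolding e using philt[of k] by simp
    qed
    then show ?thesis unfolding AP_def by simp
  qed
  have IPT: "IP x = T" using APQ[of 0] AP_0[of \<beta> x] Q0 by simp
  have fd: "frac_digit x \<beta> k = f k" if kpos: "k > 0" for k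
  proof -
    obtain j where j: "k = Suc j" using kpos gr0_implies_Suc by blast
    show ?thesis unfolding frac_digit_eq APQ j QS using flt[of "Suc j"] by simp
  qed
  have idg: "int_digit x \<beta> i = z i" for i
    unfolding int_digit_eq IPT T_def digit_sum[OF allI[OF zlt]] using z0[of i] by auto
  have sign: "rep x \<beta> 0 = w 0"
  proof (cases "w 0 = Minus")
    case False
    then have "w 0 = Plus" using w0 by simp
    then show ?thesis using False ax0 unfolding rep_0 x_def by simp
  next
    case True
    have "ax > 0"
    proof (rule ccontr)
      assume "\<not> ax > 0"
      then have a0: "ax = 0" using ax0 by simp
      have Qz: "Q k = 0" for k
        using xk[of k] phi0[of k] a0 absx by simp
      have fz: "f k = 0" if "k > 0" for k using fd[OF that] Qz unfolding frac_digit_eq APQ by simp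
      have zz: "z i = 0" for i using idg[of i] Qz[of 0] Q0 IPT unfolding int_digit_eq by simp
      obtain n where n: "n > 0" "w n \<noteq> Dig 0" using mn[OF True] by blast
      obtain d where d: "w n = Dig d" using sh[OF n(1)] by blast
      show False
      proof (cases "even n")
        case True
        then obtain k where k: "n = 2 * k" by blast
        then have "k > 0" using n by simp
        then show False using d n(2) fz[of k] k unfolding f_def by simp
      next
        case False
        then obtain i where i: "n = 2 * i + 1" by (metis oddE)
        then show False using d n(2) zz[of i] unfolding z_def by simp
      qed
    qed
    then show ?thesis using True unfolding rep_0 x_def by simp
  qed
  have "w n = rep x \<beta> n" for n
  proof (cases "n = 0")
    case True then show ?thesis using sign by simp
  next
    case n0: False
    obtain d where d: "w n = Dig d" using sh[of n] n0 by blast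
    show ?thesis
    proof (cases "even n")
      case True
      then obtain k where k: "n = 2 * k" by blast
      then have "k > 0" using n0 by simp
      then show ?thesis using d fd[of k] unfolding k rep_even[OF \<open>k > 0\<close>] f_def by simp
    next
      case False
      then obtain i where i: "n = 2 * i + 1" by (metis oddE)
      then show ?thesis using d idg[of i] unfolding i rep_odd z_def by simp
    qed
  qed
  then show ?thesis by blast
qed


type_synonym vstate = "bool \<times> bool \<times> bool \<times> bool \<times> bool \<times> bool"

definition \<delta>V :: "nat \<Rightarrow> vstate \<Rightarrow> repsym \<times> bool \<Rightarrow> vstate" where
  "\<delta>V \<beta> q ab = (case q of (st, par, pm, dead, pend, good) \<Rightarrow> (case ab of (a, b) \<Rightarrow>
     (True, \<not> par, b,
      dead \<or> (if \<not> st then a \<notin> {Plus, Minus} else a \<notin> Dig ` {0..<\<beta>}) \<or> (pm \<and> \<not> b) \<or> (b \<and> par \<and> a \<noteq> Dig 0),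
      (if \<not> st then a = Minus else pend \<and> a = Dig 0),
      st \<and> \<not> par \<and> b \<and> a \<noteq> Dig (\<beta> - 1))))"

definition FV :: "vstate set" where
  "FV = {(st, par, pm, dead, pend, good). \<not> dead \<and> \<not> pend \<and> good}"

definition vbad :: "nat \<Rightarrow> (nat \<Rightarrow> repsym) \<Rightarrow> (nat \<Rightarrow> bool) \<Rightarrow> nat \<Rightarrow> bool" where
  "vbad \<beta> w m j \<longleftrightarrow> (if j = 0 then w 0 \<notin> {Plus, Minus} else w j \<notin> Dig ` {0..<\<beta>}) \<or>
     (0 < j \<and> m (j - 1) \<and> \<not> m j) \<or> (m j \<and> odd j \<and> w j \<noteq> Dig 0)"

definition vG :: "nat \<Rightarrow> (nat \<Rightarrow> repsym) \<Rightarrow> (nat \<Rightarrow> bool) \<Rightarrow> nat \<Rightarrow> bool" where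
  "vG \<beta> w m j \<longleftrightarrow> 0 < j \<and> even j \<and> m j \<and> w j \<noteq> Dig (\<beta> - 1)"

definition vS :: "nat \<Rightarrow> (nat \<Rightarrow> repsym) \<Rightarrow> (nat \<Rightarrow> bool) \<Rightarrow> nat \<Rightarrow> vstate" where
  "vS \<beta> w m i = (0 < i, odd i, 0 < i \<and> m (i - 1), \<exists>j<i. vbad \<beta> w m j,
     0 < i \<and> w 0 = Minus \<and> (\<forall>j. 0 < j \<and> j < i \<longrightarrow> w j = Dig 0), 0 < i \<and> vG \<beta> w m (i - 1))"

lemma drun_vS: "drun (False, False, False, False, False, False) (\<delta>V \<beta>) (\<lambda>i. (w i, m i)) i = vS \<beta> w m i"
proof (induction i)
  case 0 then show ?case by (simp add: vS_def)
next
  case (Suc i)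
  show ?case
  proof (cases "i = 0")
    case True then show ?thesis by (simp add: vS_def \<delta>V_def vbad_def vG_def)
  next
    case False
    have "(\<exists>j<Suc i. vbad \<beta> w m j) = ((\<exists>j<i. vbad \<beta> w m j) \<or> vbad \<beta> w m i)"
      by (auto simp: less_Suc_eq)
    moreover have "(\<forall>j. 0 < j \<and> j < Suc i \<longrightarrow> w j = Dig 0) =
        ((\<forall>j. 0 < j \<and> j < i \<longrightarrow> w j = Dig 0) \<and> w i = Dig 0)"
      using False by (auto simp: less_Suc_eq)
    ultimately show ?thesis using False Suc.IH
      by (simp add: vS_def \<delta>V_def vbad_def vG_def)
  qed
qed

lemma valid_iff_run:
  "valid_form \<beta> w \<longleftrightarrow> (\<exists>m. \<exists>\<^sub>\<infinity>i. vS \<beta> w m i \<in> FV)"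
proof
  assume v: "valid_form \<beta> w"
  from v have w0: "w 0 \<in> {Plus, Minus}" and sh: "\<And>n. n > 0 \<Longrightarrow> \<exists>d<\<beta>. w n = Dig d"
    and infr: "\<And>M. \<exists>k>M. even k \<and> w k \<noteq> Dig (\<beta> - 1)"
    and mn: "w 0 = Minus \<Longrightarrow> \<exists>n>0. w n \<noteq> Dig 0"
    unfolding valid_form_def by blast+
  from v obtain N where N: "\<And>i. i \<ge> N \<Longrightarrow> odd i \<Longrightarrow> w i = Dig 0"
    unfolding valid_form_def by blast
  obtain n0 where n0: "w 0 = Minus \<Longrightarrow> n0 > 0 \<and> w n0 \<noteq> Dig 0" using mn by blast
  define m where "m j = (j \<ge> N)" for j
  have nobad: "\<not> vbad \<beta> w m j" for j
  proof -
    have "w j \<in> Dig ` {0..<\<beta>}" if "j > 0" using sh[OF that] by auto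
    then show ?thesis unfolding vbad_def m_def using w0 N by auto
  qed
  have "\<exists>i>M. vS \<beta> w m i \<in> FV" for M
  proof -
    obtain k where k: "k > max M (max N n0)" "even k" "w k \<noteq> Dig (\<beta> - 1)" using infr by blast
    have "vS \<beta> w m (Suc k) \<in> FV"
      unfolding vS_def FV_def vG_def using nobad k n0 by (auto simp: m_def)
    then show ?thesis using k by (intro exI[of _ "Suc k"]) auto
  qed
  then show "\<exists>m. \<exists>\<^sub>\<infinity>i. vS \<beta> w m i \<in> FV" unfolding INFM_nat by blast
next
  assume "\<exists>m. \<exists>\<^sub>\<infinity>i. vS \<beta> w m i \<in> FV"
  then obtain m where inf: "\<And>M. \<exists>i>M. vS \<beta> w m i \<in> FV" unfolding INFM_nat by blast
  have fin: "0 < i \<and> \<not> (\<exists>j<i. vbad \<beta> w m j) \<and>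
      \<not> (w 0 = Minus \<and> (\<forall>j. 0 < j \<and> j < i \<longrightarrow> w j = Dig 0)) \<and> vG \<beta> w m (i - 1)"
    if "vS \<beta> w m i \<in> FV" for i
    using that unfolding vS_def FV_def by auto
  have nobad: "\<not> vbad \<beta> w m j" for j
    using inf[of j] fin by blast
  have w0: "w 0 \<in> {Plus, Minus}" using nobad[of 0] unfolding vbad_def by auto
  have sh: "\<exists>d<\<beta>. w n = Dig d" if "n > 0" for n
    using nobad[of n] that unfolding vbad_def by auto
  obtain i0 where i0: "vS \<beta> w m i0 \<in> FV" using inf[of 0] by blast
  define j0 where "j0 = i0 - 1"
  have mj0: "m j0" using fin[OF i0] unfolding j0_def vG_def by simp
  have mono: "m (j0 + d)" for d
  proof (induction d)
    case 0 then show ?case using mj0 by simp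
  next
    case (Suc d) then show ?case using nobad[of "j0 + Suc d"] unfolding vbad_def by simp
  qed
  have evz: "\<forall>i\<ge>j0. odd i \<longrightarrow> w i = Dig 0"
  proof (intro allI impI)
    fix i assume "i \<ge> j0" "odd i"
    then have "m i" using mono[of "i - j0"] by simp
    then show "w i = Dig 0" using nobad[of i] \<open>odd i\<close> unfolding vbad_def by simp
  qed
  have infr: "\<exists>k>M. even k \<and> w k \<noteq> Dig (\<beta> - 1)" for M
  proof -
    obtain i where i: "i > Suc M" "vS \<beta> w m i \<in> FV" using inf by blast
    then show ?thesis using fin[OF i(2)] unfolding vG_def by (intro exI[of _ "i - 1"]) auto
  qed
  have mn: "\<exists>n>0. w n \<noteq> Dig 0" if "w 0 = Minus"
    using fin[OF i0] that by auto
  show "valid_form \<beta> w" unfolding valid_form_def using w0 sh evz infr mn by blast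
qed

lemma reg_valid: "reg {w. valid_form \<beta> w}"
proof -
  define Lv where "Lv = {v. \<exists>\<^sub>\<infinity>i. drun (False, False, False, False, False, False) (\<delta>V \<beta>) v i \<in> FV}"
  have r: "reg Lv" unfolding Lv_def by (rule reg_det)
  have "{w. valid_form \<beta> w} = {w. \<exists>v\<in>Lv. w = fst \<circ> v}"
  proof (intro set_eqI iffI; simp)
    fix w assume "valid_form \<beta> w"
    then obtain m where "\<exists>\<^sub>\<infinity>i. vS \<beta> w m i \<in> FV" using valid_iff_run by blast
    then have "(\<lambda>i. (w i, m i)) \<in> Lv" unfolding Lv_def using drun_vS[of \<beta> w m] by simp
    moreover have "w = fst \<circ> (\<lambda>i. (w i, m i))" by auto
    ultimately show "\<exists>v\<in>Lv. w = fst \<circ> v" by blast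
  next
    fix w assume "\<exists>v\<in>Lv. w = fst \<circ> v"
    then obtain v where v: "v \<in> Lv" "w = fst \<circ> v" by blast
    define m' where "m' = (\<lambda>i. snd (v i))"
    have vv: "v = (\<lambda>i. (w i, m' i))" using v(2) unfolding m'_def by auto
    have "\<exists>\<^sub>\<infinity>i. drun (False, False, False, False, False, False) (\<delta>V \<beta>) (\<lambda>i. (w i, m' i)) i \<in> FV"
      using v(1) unfolding Lv_def vv by simp
    then have "\<exists>\<^sub>\<infinity>i. vS \<beta> w m' i \<in> FV" unfolding drun_vS .
    then show "valid_form \<beta> w" using valid_iff_run by blast
  qed
  then show ?thesis using reg_image[OF r] by simp
qed


type_synonym kstate = "bool \<times> bool \<times> bool \<times> bool \<times> bool option \<times> bool option"

definition cmpn :: "nat \<Rightarrow> nat \<Rightarrow> bool option" where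
  "cmpn a b = (if a < b then Some True else if b < a then Some False else None)"

lemma cmpn_None[simp]: "cmpn a b = None \<longleftrightarrow> a = b"
  unfolding cmpn_def by auto

lemma lex_less:
  fixes B p q d e :: nat
  assumes "d < B" "p < q"
  shows "B * p + d < B * q + e"
proof -
  have "B * p + d < B * Suc p" using assms(1) by simp
  also have "B * Suc p \<le> B * q" using assms(2) by (intro mult_le_mono2) simp
  finally show ?thesis by simp
qed

lemma cmpn_lex:
  fixes B p q d e :: nat
  assumes "d < B" "e < B"
  shows "cmpn (B * p + d) (B * q + e) = (if p = q then cmpn d e else cmpn p q)"
proof (cases "p = q")
  case True then show ?thesis unfolding cmpn_def by simp
next
  case False
  then consider "p < q" | "q < p" by linarith
  then show ?thesis
  proof cases
    case 1 then show ?thesis using lex_less[OF assms(1) 1, of e] unfolding cmpn_def by auto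
  next
    case 2 then show ?thesis using lex_less[OF assms(2) 2, of d] unfolding cmpn_def by auto
  qed
qed

definition \<delta>K :: "kstate \<Rightarrow> repsym \<times> repsym \<Rightarrow> kstate" where
  "\<delta>K q ab = (case q of (st, par, nx, ny, ci, cf) \<Rightarrow> (case ab of (a, b) \<Rightarrow>
     (if \<not> st then (True, True, a = Minus, b = Minus, None, None)
      else if par then (True, False, nx, ny, if dv a \<noteq> dv b then cmpn (dv a) (dv b) else ci, cf)
      else (True, True, nx, ny, ci, if cf = None then cmpn (dv a) (dv b) else cf))))"

definition sval :: "bool option \<Rightarrow> real" where
  "sval c = (case c of None \<Rightarrow> 0 | Some True \<Rightarrow> -1 | Some False \<Rightarrow> 1)"

definition res :: "kstate \<Rightarrow> real" where
  "res q = (case q of (st, par, nx, ny, ci, cf) \<Rightarrow>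
     (let s = sval (if ci \<noteq> None then ci else cf) in
      if \<not> nx \<and> \<not> ny then s else if nx \<and> ny then - s else if nx then -1 else 1))"

definition FK :: "(real \<Rightarrow> real \<Rightarrow> bool) \<Rightarrow> kstate set" where
  "FK R = {q. fst q \<and> R (res q) 0}"

definition KS :: "nat \<Rightarrow> real \<Rightarrow> real \<Rightarrow> nat \<Rightarrow> kstate" where
  "KS \<beta> x y i = (if i = 0 then (False, False, False, False, None, None) else
     (True, odd i, x < 0, y < 0,
      cmpn (IP x mod \<beta> ^ (i div 2)) (IP y mod \<beta> ^ (i div 2)),
      cmpn (AP \<beta> x ((i - 1) div 2) mod \<beta> ^ ((i - 1) div 2)) (AP \<beta> y ((i - 1) div 2) mod \<beta> ^ ((i - 1) div 2))))"

lemma cmpn_mod_Suc: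
  fixes u v :: nat
  assumes "\<beta> > 0"
  shows "cmpn (u mod \<beta> ^ Suc j) (v mod \<beta> ^ Suc j) =
    (if u div \<beta> ^ j mod \<beta> = v div \<beta> ^ j mod \<beta> then cmpn (u mod \<beta> ^ j) (v mod \<beta> ^ j)
     else cmpn (u div \<beta> ^ j mod \<beta>) (v div \<beta> ^ j mod \<beta>))"
proof -
  have e: "w mod \<beta> ^ Suc j = \<beta> ^ j * (w div \<beta> ^ j mod \<beta>) + w mod \<beta> ^ j" for w :: nat
    unfolding power_Suc2 by (rule mod_mult2_eq)
  show ?thesis unfolding e using assms by (subst cmpn_lex) simp_all
qed

lemma KS_odd: "KS \<beta> x y (Suc (2 * j)) = (True, True, x < 0, y < 0,
   cmpn (IP x mod \<beta> ^ j) (IP y mod \<beta> ^ j), cmpn (AP \<beta> x j mod \<beta> ^ j) (AP \<beta> y j mod \<beta> ^ j))"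
  unfolding KS_def by simp

lemma KS_even: "KS \<beta> x y (Suc (Suc (2 * j))) = (True, False, x < 0, y < 0,
   cmpn (IP x mod \<beta> ^ Suc j) (IP y mod \<beta> ^ Suc j), cmpn (AP \<beta> x j mod \<beta> ^ j) (AP \<beta> y j mod \<beta> ^ j))"
  unfolding KS_def by simp

lemma rep_odd': "rep x \<beta> (Suc (2 * i)) = Dig (int_digit x \<beta> i)"
  unfolding rep_def by simp
lemma rep_even': "rep x \<beta> (Suc (Suc (2 * i))) = Dig (frac_digit x \<beta> (Suc i))"
  unfolding rep_def by simp

lemma drun_KS:
  assumes b: "\<beta> \<ge> 2"
  shows "drun (False, False, False, False, None, None) \<delta>K (\<lambda>i. (rep x \<beta> i, rep y \<beta> i)) i = KS \<beta> x y i"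
proof (induction i)
  case 0 then show ?case by (simp add: KS_def)
next
  case (Suc i)
  have b0: "\<beta> > 0" using b by simp
  have step: "drun (False, False, False, False, None, None) \<delta>K (\<lambda>i. (rep x \<beta> i, rep y \<beta> i)) (Suc i)
      = \<delta>K (KS \<beta> x y i) (rep x \<beta> i, rep y \<beta> i)" using Suc.IH by simp
  have "\<delta>K (KS \<beta> x y i) (rep x \<beta> i, rep y \<beta> i) = KS \<beta> x y (Suc i)"
  proof (cases "i = 0")
    case True then show ?thesis by (simp add: KS_def \<delta>K_def rep_0 cmpn_def)
  next
    case i0: False
    show ?thesis
    proof (cases "odd i")
      case True
      then obtain j where j: "i = Suc (2 * j)" by (metis oddE Suc_eq_plus1)
      show ?thesis unfolding j KS_odd KS_even rep_odd' cmpn_mod_Suc[OF b0]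
        by (simp add: \<delta>K_def int_digit_eq)
    next
      case False
      then obtain j where j: "i = 2 * j" by blast
      then obtain j' where j': "j = Suc j'" using i0 by (cases j) auto
      have k: "i = Suc (Suc (2 * j'))" using j j' by simp
      have cf: "cmpn (AP \<beta> x (Suc j') mod \<beta> ^ Suc j') (AP \<beta> y (Suc j') mod \<beta> ^ Suc j') =
         (if AP \<beta> x j' mod \<beta> ^ j' = AP \<beta> y j' mod \<beta> ^ j' then cmpn (AP \<beta> x (Suc j') mod \<beta>) (AP \<beta> y (Suc j') mod \<beta>)
          else cmpn (AP \<beta> x j' mod \<beta> ^ j') (AP \<beta> y j' mod \<beta> ^ j'))"
        unfolding AP_mod_Suc[OF b0] using b0 by (subst cmpn_lex) simp_all
      have e: "Suc (Suc (Suc (2 * j'))) = Suc (2 * Suc j')" by simp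
      show ?thesis unfolding k KS_even rep_even' e KS_odd
        using cf by (simp add: \<delta>K_def frac_digit_eq)
    qed
  qed
  then show ?case using step by simp
qed


lemma ev_lt:
  assumes b: "\<beta> \<ge> 2" and lt: "\<bar>x\<bar> < \<bar>y\<bar>"
  shows "\<exists>K. \<forall>k\<ge>K. AP \<beta> x k < AP \<beta> y k"
proof -
  obtain K where K: "1 / (\<bar>y\<bar> - \<bar>x\<bar>) < real \<beta> ^ K" using pow_unbounded[OF b] by blast
  have "AP \<beta> x k < AP \<beta> y k" if k: "k \<ge> K" for k
  proof -
    have "real \<beta> ^ K \<le> real \<beta> ^ k" using b k by (intro power_increasing) simp_all
    then have "1 / (\<bar>y\<bar> - \<bar>x\<bar>) < real \<beta> ^ k" using K by simp
    then have "1 < (\<bar>y\<bar> - \<bar>x\<bar>) * real \<beta> ^ k" using lt by (simp add: field_simps)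
    then have "\<bar>x\<bar> * real \<beta> ^ k < \<bar>y\<bar> * real \<beta> ^ k - 1" by (simp add: algebra_simps)
    then have "real (AP \<beta> x k) < real (AP \<beta> y k)"
      using AP_le[of \<beta> x k] AP_gt[of y \<beta> k] by linarith
    then show ?thesis by simp
  qed
  then show ?thesis by blast
qed

definition cmpr :: "real \<Rightarrow> real \<Rightarrow> bool option" where
  "cmpr a b = (if a < b then Some True else if b < a then Some False else None)"

lemma ev_cmp:
  assumes b: "\<beta> \<ge> 2"
  shows "\<exists>K. \<forall>k\<ge>K. cmpn (AP \<beta> x k) (AP \<beta> y k) = cmpr \<bar>x\<bar> \<bar>y\<bar>"
proof -
  consider "\<bar>x\<bar> < \<bar>y\<bar>" | "\<bar>y\<bar> < \<bar>x\<bar>" | "\<bar>x\<bar> = \<bar>y\<bar>" by linarith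
  then show ?thesis
  proof cases
    case 1
    then obtain K where h: "\<forall>k\<ge>K. AP \<beta> x k < AP \<beta> y k" using ev_lt[OF b] by blast
    show ?thesis
    proof (intro exI[of _ K] allI impI)
      fix k assume "k \<ge> K"
      then have "AP \<beta> x k < AP \<beta> y k" using h by blast
      then show "cmpn (AP \<beta> x k) (AP \<beta> y k) = cmpr \<bar>x\<bar> \<bar>y\<bar>" using 1 by (simp add: cmpn_def cmpr_def)
    qed
  next
    case 2
    then obtain K where h: "\<forall>k\<ge>K. AP \<beta> y k < AP \<beta> x k" using ev_lt[OF b] by blast
    show ?thesis
    proof (intro exI[of _ K] allI impI)
      fix k assume "k \<ge> K"
      then have "AP \<beta> y k < AP \<beta> x k" using h by blast
      then show "cmpn (AP \<beta> x k) (AP \<beta> y k) = cmpr \<bar>x\<bar> \<bar>y\<bar>" using 2 by (simp add: cmpn_def cmpr_def)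
    qed
  next
    case 3
    then have "AP \<beta> x k = AP \<beta> y k" for k unfolding AP_def by simp
    then show ?thesis using 3 unfolding cmpn_def cmpr_def by auto
  qed
qed

lemma IP_mod:
  assumes b: "\<beta> \<ge> 2" and k: "k \<ge> IP x"
  shows "IP x mod \<beta> ^ k = IP x"
proof -
  have "IP x \<le> k" by (rule k)
  also have "k < 2 ^ k" by simp
  also have "(2::nat) ^ k \<le> \<beta> ^ k" using b by (simp add: power_mono)
  finally show ?thesis by simp
qed

lemma ev_res:
  assumes b: "\<beta> \<ge> 2"
  shows "\<exists>M. \<forall>i\<ge>M. fst (KS \<beta> x y i) \<and> res (KS \<beta> x y i) = sgn (x - y)"
proof -
  have b0: "\<beta> > 0" using b by simp
  obtain K where K: "\<And>k. k \<ge> K \<Longrightarrow> cmpn (AP \<beta> x k) (AP \<beta> y k) = cmpr \<bar>x\<bar> \<bar>y\<bar>"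
    using ev_cmp[OF b] by blast
  define M where "M = 2 * (K + IP x + IP y) + 1"
  have "fst (KS \<beta> x y i) \<and> res (KS \<beta> x y i) = sgn (x - y)" if i: "i \<ge> M" for i
  proof -
    define k where "k = (i - 1) div 2"
    have i0: "i \<noteq> 0" using i unfolding M_def by simp
    have kK: "k \<ge> K" "k \<ge> IP x" "k \<ge> IP y" using i unfolding k_def M_def by auto
    have kk: "i div 2 \<ge> IP x" "i div 2 \<ge> IP y" using kK unfolding k_def by auto
    have KSi: "KS \<beta> x y i = (True, odd i, x < 0, y < 0, cmpn (IP x) (IP y),
        cmpn (AP \<beta> x k mod \<beta> ^ k) (AP \<beta> y k mod \<beta> ^ k))"
      unfolding KS_def k_def using i0 IP_mod[OF b kk(1)] IP_mod[OF b kk(2)] by simp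
    have "cmpn (AP \<beta> x k) (AP \<beta> y k) = (if IP x = IP y then cmpn (AP \<beta> x k mod \<beta> ^ k) (AP \<beta> y k mod \<beta> ^ k)
        else cmpn (IP x) (IP y))"
      using AP_split[OF b0, of x k] AP_split[OF b0, of y k] b0
      by (metis cmpn_lex mod_less_divisor zero_less_power)
    then have c: "(if cmpn (IP x) (IP y) \<noteq> None then cmpn (IP x) (IP y)
        else cmpn (AP \<beta> x k mod \<beta> ^ k) (AP \<beta> y k mod \<beta> ^ k)) = cmpr \<bar>x\<bar> \<bar>y\<bar>"
      using K[OF kK(1)] by auto
    show ?thesis unfolding KSi res_def prod.case Let_def c
      by (auto simp: sval_def cmpr_def sgn_if)
  qed
  then show ?thesis by blast
qed

lemma K_lang:
  assumes b: "\<beta> \<ge> 2" and R: "R \<in> {(\<le>), (<), (\<ge>), (>), (=), (\<noteq>)}"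
  shows "(\<exists>\<^sub>\<infinity>i. drun (False, False, False, False, None, None) \<delta>K (\<lambda>i. (rep x \<beta> i, rep y \<beta> i)) i \<in> FK R)
    \<longleftrightarrow> R x y"
proof -
  have RR: "R (sgn (x - y)) 0 \<longleftrightarrow> R x y" using R by (auto simp: sgn_if)
  obtain M where M: "\<And>i. i \<ge> M \<Longrightarrow> fst (KS \<beta> x y i) \<and> res (KS \<beta> x y i) = sgn (x - y)"
    using ev_res[OF b] by blast
  have ev: "KS \<beta> x y i \<in> FK R \<longleftrightarrow> R x y" if "i \<ge> M" for i
    using M[OF that] RR unfolding FK_def by simp
  show ?thesis unfolding drun_KS[OF b]
  proof
    assume "\<exists>\<^sub>\<infinity>i. KS \<beta> x y i \<in> FK R"
    then obtain i where "i \<ge> M" "KS \<beta> x y i \<in> FK R" unfolding INFM_nat_le by blast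
    then show "R x y" using ev by blast
  next
    assume "R x y"
    then show "\<exists>\<^sub>\<infinity>i. KS \<beta> x y i \<in> FK R" unfolding INFM_nat_le
      using ev by (metis le_trans nat_le_linear)
  qed
qed

lemma Crep_reg:
  assumes b: "\<beta> \<ge> 2" and R: "R \<in> {(\<le>), (<), (\<ge>), (>), (=), (\<noteq>)}"
  shows "reg {w. \<exists>x y. w = (\<lambda>i. (rep x \<beta> i, rep y \<beta> i)) \<and> R x y}"
proof -
  define LK where "LK = {w. \<exists>\<^sub>\<infinity>i. drun (False, False, False, False, None, None) \<delta>K w i \<in> FK R}"
  define V where "V = {w. valid_form \<beta> w}"
  have rK: "reg LK" unfolding LK_def by (rule reg_det)
  have rV: "reg V" unfolding V_def by (rule reg_valid)
  have "{w. \<exists>x y. w = (\<lambda>i. (rep x \<beta> i, rep y \<beta> i)) \<and> R x y} =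
        {w. fst \<circ> w \<in> V} \<inter> {w. snd \<circ> w \<in> V} \<inter> LK"
  proof (intro set_eqI iffI)
    fix w assume "w \<in> {w. \<exists>x y. w = (\<lambda>i. (rep x \<beta> i, rep y \<beta> i)) \<and> R x y}"
    then obtain x y where w: "w = (\<lambda>i. (rep x \<beta> i, rep y \<beta> i))" and Rxy: "R x y" by blast
    have "fst \<circ> w = (\<lambda>i. rep x \<beta> i)" "snd \<circ> w = (\<lambda>i. rep y \<beta> i)" unfolding w by auto
    moreover have "w \<in> LK" unfolding LK_def w using K_lang[OF b R] Rxy by simp
    ultimately show "w \<in> {w. fst \<circ> w \<in> V} \<inter> {w. snd \<circ> w \<in> V} \<inter> LK"
      unfolding V_def using rep_valid[OF b] by simp
  next
    fix w assume "w \<in> {w. fst \<circ> w \<in> V} \<inter> {w. snd \<circ> w \<in> V} \<inter> LK"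
    then have v1: "valid_form \<beta> (fst \<circ> w)" and v2: "valid_form \<beta> (snd \<circ> w)" and lk: "w \<in> LK"
      unfolding V_def by auto
    obtain x where x: "fst \<circ> w = (\<lambda>n. rep x \<beta> n)" using valid_rep[OF b v1] by blast
    obtain y where y: "snd \<circ> w = (\<lambda>n. rep y \<beta> n)" using valid_rep[OF b v2] by blast
    have w: "w = (\<lambda>i. (rep x \<beta> i, rep y \<beta> i))"
    proof
      fix i show "w i = (rep x \<beta> i, rep y \<beta> i)"
        using fun_cong[OF x, of i] fun_cong[OF y, of i] by (simp add: prod_eq_iff)
    qed
    have "R x y" using lk K_lang[OF b R, of x y] unfolding LK_def w by simp
    then show "w \<in> {w. \<exists>x y. w = (\<lambda>i. (rep x \<beta> i, rep y \<beta> i)) \<and> R x y}" using w by blast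
  qed
  moreover have "reg ({w. fst \<circ> w \<in> V} \<inter> {w. snd \<circ> w \<in> V} \<inter> LK)"
    by (rule reg_Int[OF reg_Int[OF reg_preimage[OF rV] reg_preimage[OF rV]] rK])
  ultimately show ?thesis by simp
qed


theorem theorem3:
  fixes \<mu> \<beta> :: nat and f :: "(nat \<Rightarrow> nat) \<Rightarrow> real" and R :: "real \<Rightarrow> real \<Rightarrow> bool"
  assumes "\<mu> > 0" and "\<beta> \<ge> 2"
    and "omega_regular_function {0..\<mu>} f \<beta>"
    and "R \<in> {(\<le>), (<), (\<ge>), (>), (=), (\<noteq>)}"
  shows "omega_regular_comparator {0..\<mu>} f R"
proof -
  obtain M :: "(nat \<times> repsym) buchi" where M: "buchi_over ({0..\<mu>} \<times> AlphaRep \<beta>) M"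
    "\<forall>A \<in> omega_words {0..\<mu>}. \<forall>x :: real. buchi_accepts M (\<lambda>i. (A i, rep x \<beta> i)) \<longleftrightarrow> f A = x"
    using assms(3) unfolding omega_regular_function_def by blast
  define LM where "LM = {w. buchi_accepts M w}"
  define C where "C = {w. \<exists>x y. w = (\<lambda>i. (rep x \<beta> i, rep y \<beta> i)) \<and> R x y}"
  have rLM: "reg LM" unfolding LM_def by (rule buchi_to_reg[OF M(1)])
  have rC: "reg C" unfolding C_def by (rule Crep_reg[OF assms(2,4)])
  define L4 where "L4 = {v :: nat \<Rightarrow> nat \<times> nat \<times> repsym \<times> repsym. (\<lambda>(a,b,c,d). (a,c)) \<circ> v \<in> LM}
     \<inter> {v. (\<lambda>(a,b,c,d). (b,d)) \<circ> v \<in> LM} \<inter> {v. (\<lambda>(a,b,c,d). (c,d)) \<circ> v \<in> C}"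
  have r4: "reg L4" unfolding L4_def
    by (rule reg_Int[OF reg_Int[OF reg_preimage[OF rLM] reg_preimage[OF rLM]] reg_preimage[OF rC]])
  define L where "L = {w. \<exists>v\<in>L4. w = (\<lambda>(a,b,c,d). (a,b)) \<circ> v}"
  have rL: "reg L" unfolding L_def by (rule reg_image[OF r4])
  obtain M' :: "(nat \<times> nat) buchi" where M': "buchi_over ({0..\<mu>} \<times> {0..\<mu>}) M'"
    "\<forall>w. (\<forall>i. w i \<in> {0..\<mu>} \<times> {0..\<mu>}) \<longrightarrow> (buchi_accepts M' w \<longleftrightarrow> w \<in> L)"
    using reg_to_buchi[OF rL, of "{0..\<mu>} \<times> {0..\<mu>}"] by blast
  have key: "(\<lambda>i. (A i, B i)) \<in> L \<longleftrightarrow> R (f A) (f B)"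
    if A: "A \<in> omega_words {0..\<mu>}" and B: "B \<in> omega_words {0..\<mu>}" for A B
  proof
    assume "(\<lambda>i. (A i, B i)) \<in> L"
    then obtain v where v: "v \<in> L4" "(\<lambda>i. (A i, B i)) = (\<lambda>(a,b,c,d). (a,b)) \<circ> v"
      unfolding L_def by blast
    define w1 where "w1 = (\<lambda>i. fst (snd (snd (v i))))"
    define w2 where "w2 = (\<lambda>i. snd (snd (snd (v i))))"
    have vA: "fst (v i) = A i" and vB: "fst (snd (v i)) = B i" for i
      using fun_cong[OF v(2), of i] by (auto split: prod.splits)
    have e1: "(\<lambda>(a,b,c,d). (a,c)) \<circ> v = (\<lambda>i. (A i, w1 i))"
    proof
      fix i show "((\<lambda>(a,b,c,d). (a,c)) \<circ> v) i = (A i, w1 i)"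
        using vA[of i] by (cases "v i") (simp add: w1_def)
    qed
    have e2: "(\<lambda>(a,b,c,d). (b,d)) \<circ> v = (\<lambda>i. (B i, w2 i))"
    proof
      fix i show "((\<lambda>(a,b,c,d). (b,d)) \<circ> v) i = (B i, w2 i)"
        using vB[of i] by (cases "v i") (simp add: w2_def)
    qed
    have e3: "(\<lambda>(a,b,c,d). (c,d)) \<circ> v = (\<lambda>i. (w1 i, w2 i))"
      by (rule ext) (auto simp: w1_def w2_def split: prod.splits)
    from v(1) have "(\<lambda>(a,b,c,d). (c,d)) \<circ> v \<in> C" unfolding L4_def by blast
    then have "(\<lambda>i. (w1 i, w2 i)) \<in> C" unfolding e3 .
    then obtain x y where xy: "(\<lambda>i. (w1 i, w2 i)) = (\<lambda>i. (rep x \<beta> i, rep y \<beta> i))" "R x y"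
      unfolding C_def by blast
    have w1: "w1 = (\<lambda>i. rep x \<beta> i)" and w2: "w2 = (\<lambda>i. rep y \<beta> i)"
      using xy(1) by (simp_all add: fun_eq_iff)
    from v(1) have "(\<lambda>(a,b,c,d). (a,c)) \<circ> v \<in> LM" unfolding L4_def by blast
    then have "buchi_accepts M (\<lambda>i. (A i, rep x \<beta> i))" unfolding e1 LM_def w1 by blast
    then have fA: "f A = x" using M(2) A by blast
    from v(1) have "(\<lambda>(a,b,c,d). (b,d)) \<circ> v \<in> LM" unfolding L4_def by blast
    then have "buchi_accepts M (\<lambda>i. (B i, rep y \<beta> i))" unfolding e2 LM_def w2 by blast
    then have fB: "f B = y" using M(2) B by blast
    show "R (f A) (f B)" using xy(2) fA fB by simp
  next
    assume Rab: "R (f A) (f B)"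
    define v where "v = (\<lambda>i. (A i, B i, rep (f A) \<beta> i, rep (f B) \<beta> i))"
    have "buchi_accepts M (\<lambda>i. (A i, rep (f A) \<beta> i))" using M(2) A by blast
    moreover have "buchi_accepts M (\<lambda>i. (B i, rep (f B) \<beta> i))" using M(2) B by blast
    moreover have "(\<lambda>i. (rep (f A) \<beta> i, rep (f B) \<beta> i)) \<in> C" unfolding C_def using Rab by blast
    moreover have "(\<lambda>(a,b,c,d). (a,c)) \<circ> v = (\<lambda>i. (A i, rep (f A) \<beta> i))"
      "(\<lambda>(a,b,c,d). (b,d)) \<circ> v = (\<lambda>i. (B i, rep (f B) \<beta> i))"
      "(\<lambda>(a,b,c,d). (c,d)) \<circ> v = (\<lambda>i. (rep (f A) \<beta> i, rep (f B) \<beta> i))"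
      by (auto simp: v_def)
    ultimately have "v \<in> L4" unfolding L4_def LM_def by simp
    moreover have "(\<lambda>i. (A i, B i)) = (\<lambda>(a,b,c,d). (a,b)) \<circ> v" by (auto simp: v_def)
    ultimately show "(\<lambda>i. (A i, B i)) \<in> L" unfolding L_def by blast
  qed
  show ?thesis unfolding omega_regular_comparator_def
  proof (intro exI[of _ M'] conjI ballI)
    show "buchi_over ({0..\<mu>} \<times> {0..\<mu>}) M'" by (rule M'(1))
    fix A B assume A: "A \<in> omega_words {0..\<mu>}" and B: "B \<in> omega_words {0..\<mu>}"
    have "\<forall>i. (A i, B i) \<in> {0..\<mu>} \<times> {0..\<mu>}" using A B unfolding omega_words_def by auto
    then have "buchi_accepts M' (\<lambda>i. (A i, B i)) \<longleftrightarrow> (\<lambda>i. (A i, B i)) \<in> L"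
      by (rule mp[OF spec[OF M'(2), of "\<lambda>i. (A i, B i)"]])
    then show "buchi_accepts M' (\<lambda>i. (A i, B i)) \<longleftrightarrow> R (f A) (f B)"
      using key[OF A B] by simp
  qed
qed


end
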